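(* Consider the four-oscillator system below with $\alpha_\mathrm{s}=\alpha_\mathrm{n}=\frac{\pi}{2}$ or $\alpha_\mathrm{s}=\alpha_\mathrm{n}=-\frac{\pi}{2}$, and arbitrary $A\in\mathbb{R}$, $\omega\in\mathbb{R}$. Then $$H(\psi_1,\psi_3)=\sin\!\left(\frac{\psi_1}{2}\right)\sin\!\left(\frac{\psi_3}{2}\right)$$ (with $\psi_1,\psi_3$ the real-valued phase differences of a solution) is constant along every solution.
   Context: Network of $M=2$ populations of $N=2$ phase oscillators with phases $\theta_{\sigma,k}(t)\in\mathbb{R}$ (population $\sigma\in\{1,2\}$, oscillator $k\in\{1,2\}$), evolving by $$\dot\theta_{\sigma,k}=\omega+\frac{K_\mathrm{s}}{4}\sum_{j=1}^{2}\sin(\theta_{\sigma,j}-\theta_{\sigma,k}-\alpha_\mathrm{s})+\frac{K_\mathrm{n}}{4}\sum_{j=1}^{2}\sin(\theta_{\tau,j}-\theta_{\sigma,k}-\alpha_\mathrm{n}),$$ where $\tau$ denotes the population other than $\sigma$, $\omega\in\mathbb{R}$, $\alpha_\mathrm{s},\alpha_\mathrm{n}\in\mathbb{R}$ are phase lags, and the coupling strengths are parametrized by $A\in\mathbb{R}$ via $K_\mathrm{s}=(1+A)/2$, $K_\mathrm{n}=(1-A)/2$ (so $K_\mathrm{s}+K_\mathrm{n}=1$, $A=K_\mathrm{s}-K_\mathrm{n}$). The phase differences are $\psi_1=\theta_{1,1}-\theta_{1,2}$, $\psi_2=\theta_{1,2}-\theta_{2,1}$, $\psi_3=\theta_{2,1}-\theta_{2,2}$;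 they satisfy an autonomous ODE (the reduced system) since the right-hand side depends only on phase differences. *)

theory Defs
  imports "HOL-Analysis.Analysis"
begin

text \<open>Phases: th \<sigma> k t with population \<sigma> \<in> {1,2} and oscillator k \<in> {1,2};
  the other population of \<sigma> is 3 - \<sigma>.\<close>

definition Ks :: "real \<Rightarrow> real" where "Ks A = (1 + A) / 2"
definition Kn :: "real \<Rightarrow> real" where "Kn A = (1 - A) / 2"

definition rhs :: "real \<Rightarrow> real \<Rightarrow> real \<Rightarrow> real \<Rightarrow> (nat \<Rightarrow> nat \<Rightarrow> real) \<Rightarrow> nat \<Rightarrow> nat \<Rightarrow> real" where
  "rhs \<omega> A as an x \<sigma> k =
     \<omega> + Ks A / 4 * (\<Sum>j\<in>{1,2}. sin (x \<sigma> j - x \<sigma> k - as))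
       + Kn A / 4 * (\<Sum>j\<in>{1,2}. sin (x (3 - \<sigma>) j - x \<sigma> k - an))"

definition is_solution :: "real \<Rightarrow> real \<Rightarrow> real \<Rightarrow> real \<Rightarrow> real set \<Rightarrow> (nat \<Rightarrow> nat \<Rightarrow> real \<Rightarrow> real) \<Rightarrow> bool" where
  "is_solution \<omega> A as an I th \<longleftrightarrow>
     (\<forall>\<sigma>\<in>{1,2}. \<forall>k\<in>{1,2}. \<forall>t\<in>I.
        ((\<lambda>s. th \<sigma> k s) has_real_derivative rhs \<omega> A as an (\<lambda>a b. th a b t) \<sigma> k) (at t within I))"

definition psi1 :: "(nat \<Rightarrow> nat \<Rightarrow> real \<Rightarrow> real) \<Rightarrow> real \<Rightarrow> real" where
  "psi1 th t = th 1 1 t - th 1 2 t"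
definition psi2 :: "(nat \<Rightarrow> nat \<Rightarrow> real \<Rightarrow> real) \<Rightarrow> real \<Rightarrow> real" where
  "psi2 th t = th 1 2 t - th 2 1 t"
definition psi3 :: "(nat \<Rightarrow> nat \<Rightarrow> real \<Rightarrow> real) \<Rightarrow> real \<Rightarrow> real" where
  "psi3 th t = th 2 1 t - th 2 2 t"

definition H :: "real \<Rightarrow> real \<Rightarrow> real" where
  "H p1 p3 = sin (p1 / 2) * sin (p3 / 2)"

end

theory Submission
  imports Defs
begin

lemma trig_id0:
  fixes p q r s :: real
  shows "cos (p-q)  *  sin (r-s)  *  (cos (2 * r-2 * p)+cos (2 * s-2 * p)-cos (2 * r-2 * q)-cos (2 * s-2 * q))
       + sin (p-q)  *  cos (r-s)  *  (cos (2 * p-2 * r)+cos (2 * q-2 * r)-cos (2 * p-2 * s)-cos (2 * q-2 * s)) = 0"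
proof -
  have e: "\<And>x y::real. 2 * x-2 * y = 2 * (x-y)" by simp
  show ?thesis
    unfolding e cos_double sin_diff cos_diff
    using sin_cos_squared_add[of p] sin_cos_squared_add[of q] sin_cos_squared_add[of r] sin_cos_squared_add[of s]
    by algebra
qed

lemma trig_id:
  fixes a b c d :: real
  shows "cos ((a-b)/2) * sin ((c-d)/2) * (cos (c-a)+cos (d-a)-cos (c-b)-cos (d-b))
       + sin ((a-b)/2) * cos ((c-d)/2) * (cos (a-c)+cos (b-c)-cos (a-d)-cos (b-d)) = 0"
  using trig_id0[of "a/2" "b/2" "c/2" "d/2"] by (simp add: diff_divide_distrib)

lemma gen_eq:
  fixes C1 S1 C3 S3 E1 E3 k :: real
  shows "C1 * ((k * E1) / 2) * S3 + S1 * (C3 * ((k * E3) / 2))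
     = (k / 2) * (C1 * S3 * E1 + S1 * C3 * E3)"
  by (simp add: algebra_simps)

lemma sin_shift:
  assumes "\<alpha> = pi / 2 \<or> \<alpha> = - pi / 2"
  shows "sin (x - \<alpha>) = - sin \<alpha> * cos x"
proof -
  have "sin (x - \<alpha>) = sin x * cos \<alpha> - cos x * sin \<alpha>" by (rule sin_diff)
  moreover have "cos \<alpha> = 0"
  proof (cases "\<alpha> = pi/2")
    case True then show ?thesis by (simp only: cos_pi_half)
  next
    case False
    then have "\<alpha> = - (pi/2)" using assms by simp
    then show ?thesis by (simp only: cos_minus cos_pi_half)
  qed
  ultimately show ?thesis by simp
qed

theorem mainTheorem4:
  fixes \<omega> A \<alpha> :: real and I :: "real set" and th :: "nat \<Rightarrow> nat \<Rightarrow> real \<Rightarrow> real"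
  assumes "\<alpha> = pi / 2 \<or> \<alpha> = - pi / 2"
    and "is_interval I"
    and "is_solution \<omega> A \<alpha> \<alpha> I th"
    and "t1 \<in> I" and "t2 \<in> I"
  shows "H (psi1 th t1) (psi3 th t1) = H (psi1 th t2) (psi3 th t2)"
proof -
  let ?f = "\<lambda>t. H (psi1 th t) (psi3 th t)"
  have sh: "\<And>x. sin (x - \<alpha>) = - sin \<alpha> * cos x" using sin_shift[OF assms(1)] .
  have "\<forall>t\<in>I. (?f has_field_derivative 0) (at t within I)"
  proof
    fix t assume t: "t \<in> I"
    define a where "a = th 1 1 t"
    define b where "b = th 1 2 t"
    define c where "c = th 2 1 t"
    define d where "d = th 2 2 t"
    have cm: "\<And>x y::real. cos (x - y) = cos (y - x)" by (metis cos_minus minus_diff_eq)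
    let ?R = "rhs \<omega> A \<alpha> \<alpha> (\<lambda>a b. th a b t)"
    have D: "\<And>s k. s \<in> {1,2} \<Longrightarrow> k \<in> {1,2} \<Longrightarrow>
        ((\<lambda>x. th s k x) has_real_derivative ?R s k) (at t within I)"
      using assms(3) t unfolding is_solution_def by blast
    have d11: "((\<lambda>x. th 1 1 x) has_real_derivative ?R 1 1) (at t within I)" by (rule D) auto
    have d12: "((\<lambda>x. th 1 2 x) has_real_derivative ?R 1 2) (at t within I)" by (rule D) auto
    have d21: "((\<lambda>x. th 2 1 x) has_real_derivative ?R 2 1) (at t within I)" by (rule D) auto
    have d22: "((\<lambda>x. th 2 2 x) has_real_derivative ?R 2 2) (at t within I)" by (rule D) auto
    have p1: "((\<lambda>x. (th 1 1 x - th 1 2 x)/2) has_real_derivative (?R 1 1 - ?R 1 2)/2) (at t within I)"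
      using DERIV_cdivide[OF DERIV_diff[OF d11 d12], of 2] by simp
    have p3: "((\<lambda>x. (th 2 1 x - th 2 2 x)/2) has_real_derivative (?R 2 1 - ?R 2 2)/2) (at t within I)"
      using DERIV_cdivide[OF DERIV_diff[OF d21 d22], of 2] by simp
    have hd: "(?f has_real_derivative
        cos ((a - b)/2) * ((?R 1 1 - ?R 1 2)/2) * sin ((c - d)/2)
        + sin ((a - b)/2) * (cos ((c - d)/2) * ((?R 2 1 - ?R 2 2)/2))) (at t within I)"
      unfolding H_def psi1_def psi3_def a_def b_def c_def d_def
      using DERIV_mult[OF DERIV_chain2[OF DERIV_sin p1] DERIV_chain2[OF DERIV_sin p3]]
      by (simp add: algebra_simps)
    have r1: "?R 1 1 - ?R 1 2 = - sin \<alpha> * Kn A / 4 * (cos (c-a)+cos (d-a)-cos (c-b)-cos (d-b))"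
      unfolding rhs_def sh a_def b_def c_def d_def
      by (simp add: cm algebra_simps)
    have r3: "?R 2 1 - ?R 2 2 = - sin \<alpha> * Kn A / 4 * (cos (a-c)+cos (b-c)-cos (a-d)-cos (b-d))"
      unfolding rhs_def sh a_def b_def c_def d_def
      by (simp add: cm algebra_simps)
    have z: "cos ((a - b)/2) * ((?R 1 1 - ?R 1 2)/2) * sin ((c - d)/2)
        + sin ((a - b)/2) * (cos ((c - d)/2) * ((?R 2 1 - ?R 2 2)/2)) = 0"
    proof -
      have "cos ((a - b)/2) * ((?R 1 1 - ?R 1 2)/2) * sin ((c - d)/2)
        + sin ((a - b)/2) * (cos ((c - d)/2) * ((?R 2 1 - ?R 2 2)/2))
        = (- sin \<alpha> * Kn A / 4 / 2) * (cos ((a-b)/2) * sin ((c-d)/2) * (cos (c-a)+cos (d-a)-cos (c-b)-cos (d-b))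
       + sin ((a-b)/2) * cos ((c-d)/2) * (cos (a-c)+cos (b-c)-cos (a-d)-cos (b-d)))"
        unfolding r1 r3 by (rule gen_eq[where k="- sin \<alpha> * Kn A / 4"])
      also have "\<dots> = 0" by (simp add: trig_id)
      finally show ?thesis .
    qed
    show "(?f has_field_derivative 0) (at t within I)" using hd z by simp
  qed
  moreover have "convex I" using assms(2) by (simp add: is_interval_convex)
  ultimately obtain C where "\<forall>x\<in>I. ?f x = C"
    using has_field_derivative_zero_constant[of I ?f] by blast
  then show ?thesis using assms(4,5) by simp
qed

end
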